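(* Let $X$ be a real Banach space, $f\in\Gamma_0(X)$ and $f(\bar x)=0$. Then $$|\partial f|_{\rm bd}(\bar x)=\inf\{\varepsilon>0\mid \mathrm{Er}\{\mathrm{Ptb}(f,\bar x,\varepsilon)\}(\bar x)=0\}=\inf\{\varepsilon>0\mid \mathrm{Er}\{\mathrm{Ptb}_c(f,\bar x,\varepsilon)\}(\bar x)=0\}=\inf\{\varepsilon>0\mid \mathrm{Er}\{\mathrm{Ptb}_l(f,\bar x,\varepsilon)\}(\bar x)=0\}.$$
   Context: $X^*$ is the dual of $X$, $\mathbb{B}^*$ its closed unit ball. $\Gamma_0(X)$ denotes the class of extended-real-valued proper convex lower semicontinuous functions on $X$. For convex $f$ and $x\in\mathrm{dom} f$, $\partial f(x):=\{x^*\in X^*\mid \langle x^*,u-x\rangle\le f(u)-f(x)\ \forall u\in X\}$. $d(x,S)=\inf_{u\in S}\|u-x\|$ with $d(x,\emptyset)=+\infty$; $\inf\emptyset=+\infty$. $S_f:=\{x\in X\mid f(x)\le0\}$. The local error bound modulus is $\mathrm{Er}\,f(\bar x):=\liminf_{x\to\bar x,\ f(x)>0}\frac{f(x)}{d(x,S_f)}$. The boundary subdifferential slope is $|\partial f|_{\rm bd}(\bar x):=d(0,\mathrm{bd}\,\partial f(\bar x))$ (boundary in the norm topology of $X^*$). For $f(\bar x)<\infty$ and $\varepsilon\ge0$: $g:X\to\mathbb{R}\cup\{+\infty\}$ is an $\varepsilon$-perturbation of $f$ near $\bar x$ if $g(\bar x)=f(\bar x)$ and $\limsup_{x\to\bar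 x}\frac{|g(x)-f(x)|}{\|x-\bar x\|}\le\varepsilon$; the set of these is $\mathrm{Ptb}(f,\bar x,\varepsilon)$. $\mathrm{Ptb}_c(f,\bar x,\varepsilon):=\{g\in\mathrm{Ptb}(f,\bar x,\varepsilon)\mid g-f\in\Gamma_0(X)\}$, and $\mathrm{Ptb}_l(f,\bar x,\varepsilon):=\{g\mid g(u)-f(u)=\langle x^*,u-\bar x\rangle\ (u\in X)\text{ for some }x^*\in\varepsilon\mathbb{B}^*\}$. Further, $\mathrm{Er}\{\mathrm{Ptb}(f,\bar x,\varepsilon)\}(\bar x):=\inf_{g\in\Gamma_0(X)\cap\mathrm{Ptb}(f,\bar x,\varepsilon)}\mathrm{Er}\,g(\bar x)$, $\mathrm{Er}\{\mathrm{Ptb}_c(f,\bar x,\varepsilon)\}(\bar x):=\inf_{g\in\mathrm{Ptb}_c(f,\bar x,\varepsilon)}\mathrm{Er}\,g(\bar x)$, $\mathrm{Er}\{\mathrm{Ptb}_l(f,\bar x,\varepsilon)\}(\bar x):=\inf_{g\in\mathrm{Ptb}_l(f,\bar x,\varepsilon)}\mathrm{Er}\,g(\bar x)$. *)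

theory Defs
  imports "HOL-Analysis.Analysis"
begin

text \<open>The dual space X* is 'a \<Rightarrow>L real (bounded linear
  functionals) with its operator norm; its topology is the norm topology.\<close>

definition proper_fun :: "('a \<Rightarrow> ereal) \<Rightarrow> bool" where
  "proper_fun f \<longleftrightarrow> (\<forall>x. f x \<noteq> -\<infinity>) \<and> (\<exists>x. f x \<noteq> \<infinity>)"

definition convex_efun :: "('a::real_vector \<Rightarrow> ereal) \<Rightarrow> bool" where
  "convex_efun f \<longleftrightarrow>
     (\<forall>x y t. 0 < t \<and> t < 1 \<longrightarrow>
        f (t *\<^sub>R x + (1 - t) *\<^sub>R y) \<le> ereal t * f x + ereal (1 - t) * f y)"

definition lsc_efun :: "('a::topological_space \<Rightarrow> ereal) \<Rightarrow> bool" where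
  "lsc_efun f \<longleftrightarrow> (\<forall>c. closed {x. f x \<le> c})"

definition Gamma0 :: "('a::real_normed_vector \<Rightarrow> ereal) \<Rightarrow> bool" where
  "Gamma0 f \<longleftrightarrow> proper_fun f \<and> convex_efun f \<and> lsc_efun f"

definition subdiff :: "('a::real_normed_vector \<Rightarrow> ereal) \<Rightarrow> 'a \<Rightarrow> ('a \<Rightarrow>\<^sub>L real) set" where
  "subdiff f x = {xs. \<forall>u. ereal (blinfun_apply xs (u - x)) \<le> f u - f x}"

definition edist_set :: "'b::metric_space \<Rightarrow> 'b set \<Rightarrow> ereal" where
  "edist_set x S = (if S = {} then \<infinity> else ereal (infdist x S))"

definition sublevel0 :: "('a \<Rightarrow> ereal) \<Rightarrow> 'a set" where
  "sublevel0 f = {x. f x \<le> 0}"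

definition Er :: "('a::real_normed_vector \<Rightarrow> ereal) \<Rightarrow> 'a \<Rightarrow> ereal" where
  "Er f xb = Liminf (at xb within {x. f x > 0}) (\<lambda>x. f x / edist_set x (sublevel0 f))"

definition bd_slope :: "('a::real_normed_vector \<Rightarrow> ereal) \<Rightarrow> 'a \<Rightarrow> ereal" where
  "bd_slope f xb = edist_set 0 (frontier (subdiff f xb))"

text \<open>|g(x) - f(x)|, with the convention that it is 0 where g(x) = f(x) = +\<infinity>.\<close>
definition absdiff :: "ereal \<Rightarrow> ereal \<Rightarrow> ereal" where
  "absdiff a b = (if a = b then 0 else \<bar>a - b\<bar>)"

definition Ptb :: "('a::real_normed_vector \<Rightarrow> ereal) \<Rightarrow> 'a \<Rightarrow> real \<Rightarrow> ('a \<Rightarrow> ereal) set" where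
  "Ptb f xb \<epsilon> = {g. g xb = f xb \<and>
      Limsup (at xb) (\<lambda>x. absdiff (g x) (f x) / ereal (norm (x - xb))) \<le> ereal \<epsilon>}"

definition Ptb_c :: "('a::real_normed_vector \<Rightarrow> ereal) \<Rightarrow> 'a \<Rightarrow> real \<Rightarrow> ('a \<Rightarrow> ereal) set" where
  "Ptb_c f xb \<epsilon> = {g. g \<in> Ptb f xb \<epsilon> \<and> (\<exists>h. Gamma0 h \<and> (\<forall>u. g u = f u + h u))}"

definition Ptb_l :: "('a::real_normed_vector \<Rightarrow> ereal) \<Rightarrow> 'a \<Rightarrow> real \<Rightarrow> ('a \<Rightarrow> ereal) set" where
  "Ptb_l f xb \<epsilon> = {g. \<exists>xs::'a \<Rightarrow>\<^sub>L real. norm xs \<le> \<epsilon> \<and>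
      (\<forall>u. g u = f u + ereal (blinfun_apply xs (u - xb)))}"

definition Er_Ptb :: "('a::real_normed_vector \<Rightarrow> ereal) \<Rightarrow> 'a \<Rightarrow> real \<Rightarrow> ereal" where
  "Er_Ptb f xb \<epsilon> = (INF g \<in> {g. Gamma0 g} \<inter> Ptb f xb \<epsilon>. Er g xb)"

definition Er_Ptb_c :: "('a::real_normed_vector \<Rightarrow> ereal) \<Rightarrow> 'a \<Rightarrow> real \<Rightarrow> ereal" where
  "Er_Ptb_c f xb \<epsilon> = (INF g \<in> Ptb_c f xb \<epsilon>. Er g xb)"

definition Er_Ptb_l :: "('a::real_normed_vector \<Rightarrow> ereal) \<Rightarrow> 'a \<Rightarrow> real \<Rightarrow> ereal" where
  "Er_Ptb_l f xb \<epsilon> = (INF g \<in> Ptb_l f xb \<epsilon>. Er g xb)"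

end

theory Submission
  imports Defs
begin



definition sublin :: "('a::real_vector \<Rightarrow> real) \<Rightarrow> bool" where
  "sublin p \<longleftrightarrow> (\<forall>x y. p (x + y) \<le> p x + p y) \<and> (\<forall>t x. 0 \<le> t \<longrightarrow> p (t *\<^sub>R x) = t * p x)"

definition lsub :: "('a::real_vector \<times> real) set \<Rightarrow> bool" where
  "lsub G \<longleftrightarrow> (0,0) \<in> G \<and> (\<forall>x\<in>G. \<forall>y\<in>G. x + y \<in> G) \<and> (\<forall>c. \<forall>x\<in>G. c *\<^sub>R x \<in> G)"

definition domg :: "('a::real_vector \<Rightarrow> real) \<Rightarrow> ('a \<times> real) set set" where
  "domg p = {G. lsub G \<and> (\<forall>x a. (x,a) \<in> G \<longrightarrow> a \<le> p x)}"

lemma sublin_0: "sublin p \<Longrightarrow> p 0 = 0"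
  unfolding sublin_def by (metis mult_zero_left order_refl scaleR_zero_left)

lemma domg_chain:
  assumes "C \<in> chains (domg p)" "sublin p"
  shows "\<exists>U\<in>domg p. \<forall>X\<in>C. X \<subseteq> U"
proof (cases "C = {}")
  case True
  have "{(0::'a,0::real)} \<in> domg p"
    using sublin_0[OF assms(2)] by (auto simp: domg_def lsub_def)
  then show ?thesis using True by blast
next
  case False
  have ch: "C \<subseteq> domg p" "\<forall>X\<in>C. \<forall>Y\<in>C. X \<subseteq> Y \<or> Y \<subseteq> X"
    using assms(1) by (auto simp: chains_def chain_subset_def)
  have "\<Union>C \<in> domg p"
    unfolding domg_def lsub_def
  proof (intro CollectI conjI ballI allI impI)
    show "(0,0) \<in> \<Union>C" using False ch by (auto simp: domg_def lsub_def)
  next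
    fix x y assume "x \<in> \<Union>C" "y \<in> \<Union>C"
    then obtain X Y where "X \<in> C" "Y \<in> C" "x \<in> X" "y \<in> Y" by blast
    then have "x \<in> X \<union> Y" "y \<in> X \<union> Y" by auto
    moreover have "X \<union> Y \<in> C" using ch \<open>X \<in> C\<close> \<open>Y \<in> C\<close> by (metis sup.absorb1 sup.absorb2)
    moreover have "\<forall>G\<in>C. \<forall>x\<in>G. \<forall>y\<in>G. x + y \<in> G" using ch(1) unfolding domg_def lsub_def by blast
    ultimately show "x + y \<in> \<Union>C" by blast
  next
    fix c x assume "x \<in> \<Union>C"
    then show "c *\<^sub>R x \<in> \<Union>C" using ch by (auto simp: domg_def lsub_def)
  next
    fix x a assume "(x,a) \<in> \<Union>C"
    then show "a \<le> p x" using ch by (auto simp: domg_def)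
  qed
  then show ?thesis by blast
qed

lemma graph_unique:
  assumes "G \<in> domg p" "sublin p" "(x,a) \<in> G" "(x,b) \<in> G"
  shows "a = b"
proof -
  have l: "lsub G" and d: "\<And>x a. (x,a) \<in> G \<Longrightarrow> a \<le> p x" using assms(1) by (auto simp: domg_def)
  have "(-1) *\<^sub>R (x,b) \<in> G" using l assms(4) unfolding lsub_def by blast
  then have "(x,a) + (-1) *\<^sub>R (x,b) \<in> G" using l assms(3) unfolding lsub_def by blast
  then have "(0, a - b) \<in> G" by simp
  then have 1: "a - b \<le> 0" using d sublin_0[OF assms(2)] by fastforce
  have "(-1) *\<^sub>R (x,a) \<in> G" using l assms(3) unfolding lsub_def by blast
  then have "(x,b) + (-1) *\<^sub>R (x,a) \<in> G" using l assms(4) unfolding lsub_def by blast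
  then have "(0, b - a) \<in> G" by simp
  then have "b - a \<le> 0" using d sublin_0[OF assms(2)] by fastforce
  with 1 show ?thesis by simp
qed

lemma graph_extend:
  assumes M: "M \<in> domg p" and sp: "sublin p" and v: "\<forall>a. (v,a) \<notin> M"
  shows "\<exists>M'\<in>domg p. M \<subseteq> M' \<and> M' \<noteq> M"
proof -
  have l: "lsub M" and d: "\<And>x a. (x,a) \<in> M \<Longrightarrow> a \<le> p x" using M by (auto simp: domg_def)
  have sub: "\<And>x y. p (x + y) \<le> p x + p y" and hom: "\<And>t x. 0 \<le> t \<Longrightarrow> p (t *\<^sub>R x) = t * p x"
    using sp by (auto simp: sublin_def)
  have addM: "\<And>x a y b. (x,a) \<in> M \<Longrightarrow> (y,b) \<in> M \<Longrightarrow> (x+y, a+b) \<in> M"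
    using l unfolding lsub_def by (metis add_Pair)
  have scM: "\<And>x a c. (x,a) \<in> M \<Longrightarrow> (c *\<^sub>R x, c * a) \<in> M"
    using l unfolding lsub_def by (metis scaleR_Pair real_scaleR_def)
  have z: "(0,0) \<in> M" using l by (simp add: lsub_def)
  have key: "\<And>x b y a. (x,b) \<in> M \<Longrightarrow> (y,a) \<in> M \<Longrightarrow> a - p (y - v) \<le> p (x + v) - b"
  proof -
    fix x b y a assume "(x,b) \<in> M" "(y,a) \<in> M"
    then have "a + b \<le> p (x + y)" using d addM by (metis add.commute)
    also have "\<dots> \<le> p (x + v) + p (y - v)" using sub[of "x+v" "y-v"] by (simp add: algebra_simps)
    finally show "a - p (y - v) \<le> p (x + v) - b" by simp
  qed
  define S where "S = {a - p (y - v) | y a. (y,a) \<in> M}"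
  define c where "c = Sup S"
  have Sne: "S \<noteq> {}" using z by (auto simp: S_def)
  have Sbdd: "bdd_above S" unfolding S_def bdd_above_def using key[OF z] by blast
  have c_up: "\<And>y a. (y,a) \<in> M \<Longrightarrow> a - p (y - v) \<le> c"
    unfolding c_def using Sbdd by (auto intro!: cSup_upper simp: S_def)
  have c_lo: "\<And>x b. (x,b) \<in> M \<Longrightarrow> c \<le> p (x + v) - b"
    unfolding c_def using Sne by (auto intro!: cSup_least simp: S_def key)
  define M' where "M' = {(x + t *\<^sub>R v, a + t * c) | x a t. (x,a) \<in> M}"
  have "M \<subseteq> M'" unfolding M'_def by force
  moreover have "(v, c) \<in> M'" unfolding M'_def using z by force
  moreover have "M' \<in> domg p"
    unfolding domg_def lsub_def
  proof (intro CollectI conjI ballI allI impI)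
    show "(0,0) \<in> M'" using \<open>M \<subseteq> M'\<close> z by blast
  next
    fix q r assume "q \<in> M'" "r \<in> M'"
    then obtain x a t y b s where q: "q = (x + t *\<^sub>R v, a + t * c)" "(x,a) \<in> M"
      and r: "r = (y + s *\<^sub>R v, b + s * c)" "(y,b) \<in> M" unfolding M'_def by blast
    have "q + r = ((x+y) + (t+s) *\<^sub>R v, (a+b) + (t+s)*c)" using q r by (simp add: algebra_simps)
    then show "q + r \<in> M'" unfolding M'_def using addM[OF q(2) r(2)] by blast
  next
    fix k q assume "q \<in> M'"
    then obtain x a t where q: "q = (x + t *\<^sub>R v, a + t * c)" "(x,a) \<in> M" unfolding M'_def by blast
    have "k *\<^sub>R q = (k *\<^sub>R x + (k*t) *\<^sub>R v, k * a + (k*t) * c)" using q by (simp add: algebra_simps)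
    then show "k *\<^sub>R q \<in> M'" unfolding M'_def using scM[OF q(2)] by blast
  next
    fix z e assume "(z,e) \<in> M'"
    then obtain x a t where q: "z = x + t *\<^sub>R v" "e = a + t * c" "(x,a) \<in> M" unfolding M'_def by blast
    consider "t = 0" | "t > 0" | "t < 0" by linarith
    then show "e \<le> p z"
    proof cases
      case 1 then show ?thesis using q d by simp
    next
      case 2
      have "(inverse t *\<^sub>R x, inverse t * a) \<in> M" using scM[OF q(3)] .
      from c_lo[OF this] have "c \<le> p (inverse t *\<^sub>R x + v) - inverse t * a" .
      then have "t * c \<le> t * (p (inverse t *\<^sub>R x + v) - inverse t * a)" using 2
        by (simp add: mult_left_mono)
      moreover have "t * (inverse t * a) = a" using 2 by simp
      ultimately have "t * c \<le> t * p (inverse t *\<^sub>R x + v) - a"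
        by (simp add: right_diff_distrib)
      also have "t * p (inverse t *\<^sub>R x + v) = p (t *\<^sub>R (inverse t *\<^sub>R x + v))" using hom 2 by simp
      also have "t *\<^sub>R (inverse t *\<^sub>R x + v) = x + t *\<^sub>R v" using 2 by (simp add: scaleR_add_right)
      finally show ?thesis using q by simp
    next
      case 3
      define s where "s = - t"
      have s: "s > 0" using 3 s_def by simp
      have "(inverse s *\<^sub>R x, inverse s * a) \<in> M" using scM[OF q(3)] .
      from c_up[OF this] have "inverse s * a - p (inverse s *\<^sub>R x - v) \<le> c" .
      then have "s * (inverse s * a - p (inverse s *\<^sub>R x - v)) \<le> s * c" using s
        by (simp add: mult_left_mono)
      moreover have "s * (inverse s * a) = a" using s by simp
      ultimately have "a - s * p (inverse s *\<^sub>R x - v) \<le> s * c"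
        by (simp add: right_diff_distrib)
      also have "s * p (inverse s *\<^sub>R x - v) = p (s *\<^sub>R (inverse s *\<^sub>R x - v))" using hom s by simp
      also have "s *\<^sub>R (inverse s *\<^sub>R x - v) = x + t *\<^sub>R v" using s by (simp add: s_def scaleR_diff_right)
      finally show ?thesis using q s_def by simp
    qed
  qed
  moreover have "M' \<noteq> M" using v \<open>(v,c) \<in> M'\<close> by blast
  ultimately show ?thesis by blast
qed

theorem hahn_banach_sublin:
  fixes p :: "'a::real_vector \<Rightarrow> real"
  assumes sp: "sublin p"
  shows "\<exists>L. linear L \<and> (\<forall>x. L x \<le> p x)"
proof -
  have "\<forall>C\<in>chains (domg p). \<exists>U\<in>domg p. \<forall>X\<in>C. X \<subseteq> U" using domg_chain sp by blast
  from Zorn_Lemma2[OF this] obtain M where M: "M \<in> domg p" and mx: "\<forall>X\<in>domg p. M \<subseteq> X \<longrightarrow> X = M" by blast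
  have tot: "\<forall>x. \<exists>a. (x,a) \<in> M"
  proof (rule ccontr)
    assume "\<not> ?thesis" then obtain v where "\<forall>a. (v,a) \<notin> M" by blast
    from graph_extend[OF M sp this] mx show False by blast
  qed
  define L where "L x = (THE a. (x,a) \<in> M)" for x
  have LM: "(x, L x) \<in> M" for x
    unfolding L_def using tot graph_unique[OF M sp] by (metis theI)
  have l: "lsub M" and d: "\<And>x a. (x,a) \<in> M \<Longrightarrow> a \<le> p x" using M by (auto simp: domg_def)
  have "linear L"
  proof (rule linearI)
    fix x y
    have "(x,L x) + (y, L y) \<in> M" using l LM unfolding lsub_def by blast
    then have h: "(x + y, L x + L y) \<in> M" by simp
    show "L (x + y) = L x + L y" using graph_unique[OF M sp LM h] by simp
  next
    fix c x
    have "c *\<^sub>R (x,L x) \<in> M" using l LM unfolding lsub_def by blast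
    then have h: "(c *\<^sub>R x, c *\<^sub>R L x) \<in> M" by simp
    show "L (c *\<^sub>R x) = c *\<^sub>R L x" using graph_unique[OF M sp LM h] by simp
  qed
  moreover have "\<forall>x. L x \<le> p x" using d LM by blast
  ultimately show ?thesis by blast
qed




lemma sandwich_real:
  fixes \<phi> :: "'a::real_normed_vector \<Rightarrow> real"
  assumes cvx: "\<And>x y t. 0 < t \<Longrightarrow> t < 1 \<Longrightarrow> \<phi> (t *\<^sub>R x + (1-t) *\<^sub>R y) \<le> t * \<phi> x + (1-t) * \<phi> y"
    and z: "\<phi> 0 = 0" and b: "b \<ge> 0" and bnd: "\<And>d. \<bar>\<phi> d\<bar> \<le> b * norm d"
  shows "\<exists>L::'a \<Rightarrow>\<^sub>L real. norm L \<le> b \<and> (\<forall>d. blinfun_apply L d \<le> \<phi> d)"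
proof -
  define p where "p d = Inf ((\<lambda>t. \<phi> (t *\<^sub>R d) / t) ` {0<..})" for d
  have lb: "- b * norm d \<le> \<phi> (t *\<^sub>R d) / t" if "t > 0" for t d
  proof -
    have "- b * norm (t *\<^sub>R d) \<le> \<phi> (t *\<^sub>R d)" using bnd[of "t *\<^sub>R d"] by linarith
    then have "- b * (t * norm d) \<le> \<phi> (t *\<^sub>R d)" using that by simp
    then show ?thesis using that by (simp add: field_simps)
  qed
  have bdd: "bdd_below ((\<lambda>t. \<phi> (t *\<^sub>R d) / t) ` {0<..})" for d
    by (rule bdd_belowI[of _ "-b*norm d"]) (use lb in auto)
  have p_le: "p d \<le> \<phi> (t *\<^sub>R d) / t" if "t > 0" for t d
    unfolding p_def by (rule cInf_lower[OF imageI bdd]) (use that in simp)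
  have p_ge: "c \<le> p d" if "\<And>t. t > 0 \<Longrightarrow> c \<le> \<phi> (t *\<^sub>R d) / t" for c d
    unfolding p_def
  proof (rule cInf_greatest)
    show "(\<lambda>t. \<phi> (t *\<^sub>R d) / t) ` {0<..} \<noteq> {}" by auto
  next
    fix y assume "y \<in> (\<lambda>t. \<phi> (t *\<^sub>R d) / t) ` {0<..}"
    then obtain t where "t > 0" "y = \<phi> (t *\<^sub>R d) / t" by auto
    then show "c \<le> y" using that by simp
  qed
  have p_phi: "p d \<le> \<phi> d" for d using p_le[of 1 d] by simp
  have p0: "p 0 = 0"
  proof -
    have "p 0 \<le> 0" using p_phi[of 0] z by simp
    moreover have "0 \<le> p 0" using z by (intro p_ge) simp
    ultimately show ?thesis by simp
  qed
  have hom: "p (t *\<^sub>R x) = t * p x" if "t \<ge> 0" for t x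
  proof (cases "t = 0")
    case True then show ?thesis using p0 by simp
  next
    case False
    then have t: "t > 0" using that by simp
    have 1: "p (t *\<^sub>R x) / t \<le> p x"
    proof (rule p_ge)
      fix r :: real assume r: "r > 0"
      have "p (t *\<^sub>R x) \<le> \<phi> ((r/t) *\<^sub>R (t *\<^sub>R x)) / (r/t)" using p_le[of "r/t" "t *\<^sub>R x"] r t by simp
      also have "\<dots> = t * (\<phi> (r *\<^sub>R x) / r)" using t by simp
      finally show "p (t *\<^sub>R x) / t \<le> \<phi> (r *\<^sub>R x) / r" using t by (simp add: field_simps)
    qed
    have 2: "t * p x \<le> p (t *\<^sub>R x)"
    proof (rule p_ge)
      fix s :: real assume s: "s > 0"
      have "p x \<le> \<phi> ((s*t) *\<^sub>R x) / (s*t)" using p_le[of "s*t" x] s t by simp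
      then have "t * p x \<le> t * (\<phi> ((s*t) *\<^sub>R x) / (s*t))" using t by (intro mult_left_mono) auto
      also have "\<dots> = \<phi> (s *\<^sub>R (t *\<^sub>R x)) / s" using t s by simp
      finally show "t * p x \<le> \<phi> (s *\<^sub>R (t *\<^sub>R x)) / s" .
    qed
    from 1 2 t show ?thesis by (simp add: field_simps)
  qed
  have sub: "p (x + y) \<le> p x + p y" for x y
  proof -
    have main: "p (x + y) \<le> \<phi> (t1 *\<^sub>R x) / t1 + \<phi> (t2 *\<^sub>R y) / t2" if t1: "t1 > 0" and t2: "t2 > 0" for t1 t2
    proof -
      define s where "s = t1 * t2 / (t1 + t2)"
      define l where "l = t2 / (t1 + t2)"
      have s: "s > 0" and l0: "0 < l" and l1: "l < 1" using t1 t2 by (auto simp: s_def l_def)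
      have e1: "1 - l = t1 / (t1 + t2)" using t1 t2 by (simp add: l_def field_simps)
      have ls: "l * t1 = s" unfolding l_def s_def by simp
      have ls2: "(1 - l) * t2 = s" unfolding e1 s_def by simp
      have eq: "s *\<^sub>R (x + y) = l *\<^sub>R (t1 *\<^sub>R x) + (1 - l) *\<^sub>R (t2 *\<^sub>R y)"
        by (simp add: scaleR_add_right ls ls2)
      have "\<phi> (s *\<^sub>R (x + y)) \<le> l * \<phi> (t1 *\<^sub>R x) + (1 - l) * \<phi> (t2 *\<^sub>R y)"
        unfolding eq using cvx l0 l1 by blast
      then have "\<phi> (s *\<^sub>R (x + y)) / s \<le> (l * \<phi> (t1 *\<^sub>R x) + (1 - l) * \<phi> (t2 *\<^sub>R y)) / s"
        using s by (simp add: divide_right_mono)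
      also have "\<dots> = (l / s) * \<phi> (t1 *\<^sub>R x) + ((1 - l) / s) * \<phi> (t2 *\<^sub>R y)"
        by (simp add: add_divide_distrib)
      also have "l / s = 1 / t1" using ls t1 s by (auto simp: field_simps)
      also have "(1 - l) / s = 1 / t2" using ls2 t2 s by (auto simp: field_simps)
      also have "1 / t1 * \<phi> (t1 *\<^sub>R x) + 1 / t2 * \<phi> (t2 *\<^sub>R y) = \<phi> (t1 *\<^sub>R x) / t1 + \<phi> (t2 *\<^sub>R y) / t2"
        by simp
      finally show ?thesis using p_le[OF s, of "x+y"] by linarith
    qed
    have "p (x + y) - p y \<le> p x"
    proof (rule p_ge)
      fix t1 :: real assume t1: "t1 > 0"
      have "p (x + y) - \<phi> (t1 *\<^sub>R x) / t1 \<le> p y"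
      proof (rule p_ge)
        fix t2 :: real assume t2: "t2 > 0"
        show "p (x + y) - \<phi> (t1 *\<^sub>R x) / t1 \<le> \<phi> (t2 *\<^sub>R y) / t2"
          using main[OF t1 t2] by linarith
      qed
      then show "p (x + y) - p y \<le> \<phi> (t1 *\<^sub>R x) / t1" by linarith
    qed
    then show ?thesis by linarith
  qed
  have "sublin p" unfolding sublin_def using sub hom by blast
  from hahn_banach_sublin[OF this] obtain L where L: "linear L" "\<And>x. L x \<le> p x" by blast
  have pb: "p d \<le> b * norm d" for d using p_phi[of d] bnd[of d] by linarith
  have Lb: "norm (L d) \<le> b * norm d" for d
  proof -
    have "L d \<le> b * norm d" using L(2)[of d] pb[of d] by linarith
    moreover have "L (-d) \<le> b * norm d" using L(2)[of "-d"] pb[of "-d"] by simp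
    moreover have "L (-d) = - L d" using L(1) by (simp add: linear_neg)
    ultimately show ?thesis by simp
  qed
  have bl: "bounded_linear L"
    using L(1) Lb by (intro bounded_linear_intro[where K=b]) (auto simp: linear_add linear_scale mult.commute)
  define L' where "L' = Blinfun L"
  have L'a: "blinfun_apply L' = L" unfolding L'_def using bounded_linear_Blinfun_apply[OF bl] .
  have "norm L' \<le> b" using b Lb by (intro norm_blinfun_bound) (auto simp: L'a)
  moreover have "\<forall>d. blinfun_apply L' d \<le> \<phi> d" proof
    fix d show "blinfun_apply L' d \<le> \<phi> d" using L(2)[of d] p_phi[of d] L'a by simp
  qed
  ultimately show ?thesis by blast
qed

lemma norming:
  fixes v :: "'a::real_normed_vector"
  shows "\<exists>L::'a \<Rightarrow>\<^sub>L real. norm L \<le> 1 \<and> blinfun_apply L v = norm v"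
proof -
  define \<phi> where "\<phi> d = norm (v + d) - norm v" for d
  have cvx: "\<phi> (t *\<^sub>R x + (1-t) *\<^sub>R y) \<le> t * \<phi> x + (1-t) * \<phi> y" if "0 < t" "t < 1" for x y t
  proof -
    have "v + (t *\<^sub>R x + (1-t) *\<^sub>R y) = t *\<^sub>R (v + x) + (1-t) *\<^sub>R (v + y)"
      by (simp add: algebra_simps)
    then have "norm (v + (t *\<^sub>R x + (1-t) *\<^sub>R y)) \<le> norm (t *\<^sub>R (v + x)) + norm ((1-t) *\<^sub>R (v + y))"
      by (metis norm_triangle_ineq)
    also have "\<dots> = t * norm (v + x) + (1-t) * norm (v + y)" using that by simp
    finally show ?thesis unfolding \<phi>_def by (simp add: algebra_simps)
  qed
  have bnd: "\<bar>\<phi> d\<bar> \<le> 1 * norm d" for d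
    unfolding \<phi>_def using norm_triangle_ineq3[of "v+d" v] by simp
  obtain L :: "'a \<Rightarrow>\<^sub>L real" where L: "norm L \<le> 1" "\<And>d. blinfun_apply L d \<le> \<phi> d"
    using sandwich_real[of \<phi> 1] cvx bnd by (auto simp: \<phi>_def)
  have "blinfun_apply L (-v) \<le> - norm v" using L(2)[of "-v"] by (simp add: \<phi>_def)
  then have 1: "norm v \<le> blinfun_apply L v" by (simp add: blinfun.minus_right)
  have "blinfun_apply L v \<le> norm L * norm v" using norm_blinfun[of L v] by simp
  also have "\<dots> \<le> norm v" using L(1) by (simp add: mult_left_le_one_le)
  finally show ?thesis using 1 L(1) by (intro exI[of _ L]) simp
qed




lemma subgrad_exists:
  fixes f :: "'a::real_normed_vector \<Rightarrow> ereal"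
  assumes cvx: "convex_efun f" and nm: "\<And>x. f x \<noteq> -\<infinity>" and f0: "f xb = 0" and b: "b \<ge> 0"
    and lb: "\<And>u. ereal (- b * norm (u - xb)) \<le> f u"
  shows "\<exists>L. norm L \<le> b \<and> L \<in> subdiff f xb"
proof -
  define D where "D = {y. f (xb + y) \<noteq> \<infinity>}"
  define F where "F y = real_of_ereal (f (xb + y))" for y
  have FD: "y \<in> D \<Longrightarrow> f (xb + y) = ereal (F y)" for y
    unfolding D_def F_def using nm[of "xb+y"] by (cases "f (xb+y)") auto
  have Flb: "y \<in> D \<Longrightarrow> - b * norm y \<le> F y" for y
    using lb[of "xb + y"] FD[of y] by simp
  have D0: "0 \<in> D" and F0: "F 0 = 0" using f0 by (auto simp: D_def F_def)
  define \<psi> where "\<psi> d = Inf ((\<lambda>y. F y + b * norm (d - y)) ` D)" for d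
  have elb: "- b * norm d \<le> F y + b * norm (d - y)" if "y \<in> D" for y d
  proof -
    have "norm y \<le> norm d + norm (d - y)" by (metis add_diff_cancel_left' norm_triangle_ineq4 norm_minus_commute diff_add_cancel norm_triangle_sub)
    then have "b * norm y \<le> b * norm d + b * norm (d - y)" using b by (metis distrib_left mult_left_mono)
    then show ?thesis using Flb[OF that] by linarith
  qed
  have bdd: "bdd_below ((\<lambda>y. F y + b * norm (d - y)) ` D)" for d
    by (rule bdd_belowI[of _ "- b * norm d"]) (use elb in auto)
  have \<psi>_le: "\<psi> d \<le> F y + b * norm (d - y)" if "y \<in> D" for d y
    unfolding \<psi>_def by (rule cInf_lower[OF imageI[OF that] bdd])
  have \<psi>_ge: "c \<le> \<psi> d" if "\<And>y. y \<in> D \<Longrightarrow> c \<le> F y + b * norm (d - y)" for c d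
    unfolding \<psi>_def
  proof (rule cInf_greatest)
    show "(\<lambda>y. F y + b * norm (d - y)) ` D \<noteq> {}" using D0 by blast
  next
    fix z assume "z \<in> (\<lambda>y. F y + b * norm (d - y)) ` D"
    then obtain y where "y \<in> D" "z = F y + b * norm (d - y)" by blast
    then show "c \<le> z" using that by simp
  qed
  have \<psi>0: "\<psi> 0 = 0"
  proof -
    have "\<psi> 0 \<le> 0" using \<psi>_le[OF D0, of 0] F0 by simp
    moreover have "0 \<le> \<psi> 0" by (rule \<psi>_ge) (use elb[of _ 0] in simp)
    ultimately show ?thesis by simp
  qed
  have \<psi>b: "\<bar>\<psi> d\<bar> \<le> b * norm d" for d
  proof -
    have "\<psi> d \<le> b * norm d" using \<psi>_le[OF D0, of d] F0 by simp
    moreover have "- b * norm d \<le> \<psi> d" by (rule \<psi>_ge) (use elb in simp)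
    ultimately show ?thesis by simp
  qed
  have \<psi>c: "\<psi> (t *\<^sub>R x + (1-t) *\<^sub>R y) \<le> t * \<psi> x + (1-t) * \<psi> y" if t: "0 < t" "t < 1" for x y t
  proof -
    have main: "\<psi> (t *\<^sub>R x + (1-t) *\<^sub>R y) \<le> t * (F y1 + b * norm (x - y1)) + (1-t) * (F y2 + b * norm (y - y2))"
      if y1: "y1 \<in> D" and y2: "y2 \<in> D" for y1 y2
    proof -
      define z where "z = t *\<^sub>R y1 + (1-t) *\<^sub>R y2"
      have "xb + z = t *\<^sub>R (xb + y1) + (1-t) *\<^sub>R (xb + y2)" unfolding z_def by (simp add: algebra_simps)
      then have "f (xb + z) \<le> ereal t * f (xb + y1) + ereal (1-t) * f (xb + y2)"
        using cvx t unfolding convex_efun_def by metis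
      also have "\<dots> = ereal (t * F y1 + (1-t) * F y2)" using FD[OF y1] FD[OF y2] by simp
      finally have fz: "f (xb + z) \<le> ereal (t * F y1 + (1-t) * F y2)" .
      then have zD: "z \<in> D" unfolding D_def by auto
      have Fz: "F z \<le> t * F y1 + (1-t) * F y2" using fz FD[OF zD] by simp
      have "t *\<^sub>R x + (1-t) *\<^sub>R y - z = t *\<^sub>R (x - y1) + (1-t) *\<^sub>R (y - y2)"
        unfolding z_def by (simp add: algebra_simps)
      then have "norm (t *\<^sub>R x + (1-t) *\<^sub>R y - z) \<le> t * norm (x - y1) + (1-t) * norm (y - y2)"
        using t by (metis (no_types, lifting) abs_of_pos diff_gt_0_iff_gt norm_scaleR norm_triangle_ineq)
      then have "b * norm (t *\<^sub>R x + (1-t) *\<^sub>R y - z) \<le> b * (t * norm (x - y1) + (1-t) * norm (y - y2))"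
        by (rule mult_left_mono[OF _ b])
      then show ?thesis using \<psi>_le[OF zD, of "t *\<^sub>R x + (1-t) *\<^sub>R y"] Fz by (simp add: algebra_simps)
    qed
    have "(\<psi> (t *\<^sub>R x + (1-t) *\<^sub>R y) - t * \<psi> x) / (1 - t) \<le> \<psi> y"
    proof (rule \<psi>_ge)
      fix y2 assume y2: "y2 \<in> D"
      have "(\<psi> (t *\<^sub>R x + (1-t) *\<^sub>R y) - (1-t) * (F y2 + b * norm (y - y2))) / t \<le> \<psi> x"
      proof (rule \<psi>_ge)
        fix y1 assume y1: "y1 \<in> D"
        show "(\<psi> (t *\<^sub>R x + (1-t) *\<^sub>R y) - (1-t) * (F y2 + b * norm (y - y2))) / t \<le> F y1 + b * norm (x - y1)"
          using main[OF y1 y2] t by (simp add: divide_le_eq mult.commute)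
      qed
      then show "(\<psi> (t *\<^sub>R x + (1-t) *\<^sub>R y) - t * \<psi> x) / (1 - t) \<le> F y2 + b * norm (y - y2)"
        using t by (simp add: divide_le_eq le_divide_eq mult.commute)
    qed
    then show ?thesis using t by (simp add: divide_le_eq mult.commute)
  qed
  obtain L :: "'a \<Rightarrow>\<^sub>L real" where L: "norm L \<le> b" "\<And>d. blinfun_apply L d \<le> \<psi> d"
    using sandwich_real[of \<psi> b] \<psi>c \<psi>0 b \<psi>b by blast
  have "L \<in> subdiff f xb"
    unfolding subdiff_def
  proof (intro CollectI allI)
    fix u
    show "ereal (blinfun_apply L (u - xb)) \<le> f u - f xb"
    proof (cases "f u = \<infinity>")
      case True then show ?thesis using f0 by simp
    next
      case False
      then have uD: "u - xb \<in> D" unfolding D_def by simp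
      have "blinfun_apply L (u - xb) \<le> F (u - xb)" using L(2)[of "u - xb"] \<psi>_le[OF uD, of "u - xb"] by simp
      then show ?thesis using FD[OF uD] f0 by simp
    qed
  qed
  then show ?thesis using L(1) by blast
qed




lemma ediv_nonneg: "0 \<le> (a::ereal) \<Longrightarrow> 0 \<le> b \<Longrightarrow> 0 \<le> a / b"
  by (cases a; cases b) (auto simp: divide_ereal_def)

lemma ratio_ge:
  assumes "0 < a" "0 \<le> d" "0 \<le> c" "ereal (c*d) \<le> a"
  shows "ereal c \<le> a / ereal d"
proof (cases "d = 0")
  case True
  then show ?thesis using assms by (simp add: divide_ereal_def)
next
  case False
  then have d: "d > 0" using assms by simp
  show ?thesis
  proof (cases a)
    case (real r)
    then have "c * d \<le> r" using assms by simp
    then have "c \<le> r / d" using d by (simp add: le_divide_eq)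
    then show ?thesis using real d by simp
  next
    case PInf then show ?thesis using d by simp
  next
    case MInf then show ?thesis using assms by simp
  qed
qed

lemma ratio_le:
  assumes "0 < d" "a \<le> ereal (c*d)"
  shows "a / ereal d \<le> ereal c"
proof (cases a)
  case (real r)
  then have "r \<le> c * d" using assms by simp
  then have "r / d \<le> c" using assms by (simp add: divide_le_eq)
  then show ?thesis using real assms by simp
next
  case PInf then show ?thesis using assms by simp
next
  case MInf then show ?thesis using assms by simp
qed

lemma absdiff_lt:
  assumes "absdiff a b < ereal r"
  shows "a \<le> b + ereal r \<and> b \<le> a + ereal r"
proof (cases "a = b")
  case True
  then have "r > 0" using assms by (simp add: absdiff_def)
  then show ?thesis using True by (cases a) auto
next
  case False
  then have h: "\<bar>a - b\<bar> < ereal r" using assms by (simp add: absdiff_def)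
  show ?thesis
    using h False by (cases a; cases b) auto
qed

lemma Liminf_within_le:
  fixes X :: "'a::metric_space \<Rightarrow> ereal"
  assumes "\<And>r. r > 0 \<Longrightarrow> \<exists>x\<in>S. x \<noteq> a \<and> dist x a < r \<and> X x \<le> C"
  shows "Liminf (at a within S) X \<le> C"
  unfolding Liminf_def
proof (rule SUP_least)
  fix P assume "P \<in> {P. eventually P (at a within S)}"
  then obtain d where d: "d > 0" "\<forall>x\<in>S. x \<noteq> a \<and> dist x a < d \<longrightarrow> P x"
    by (auto simp: eventually_at)
  then obtain x where "x \<in> S" "x \<noteq> a" "dist x a < d" "X x \<le> C" using assms by blast
  then show "Inf (X ` Collect P) \<le> C" using d by (intro INF_lower2[of x]) auto
qed

lemma Liminf_within_ge:
  fixes X :: "'a::metric_space \<Rightarrow> ereal"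
  assumes "r > 0" "\<And>x. x \<in> S \<Longrightarrow> x \<noteq> a \<Longrightarrow> dist x a < r \<Longrightarrow> C \<le> X x"
  shows "C \<le> Liminf (at a within S) X"
  by (rule Liminf_bounded) (use assms in \<open>auto simp: eventually_at\<close>)

lemma Er_nonneg: "0 \<le> Er g xb"
  unfolding Er_def
  by (rule Liminf_bounded, unfold eventually_at_filter)
     (auto intro!: always_eventually ediv_nonneg simp: edist_set_def infdist_nonneg)

lemma Ptb_local:
  fixes f g :: "'a::real_normed_vector \<Rightarrow> ereal"
  assumes "g \<in> Ptb f xb \<epsilon>" "\<epsilon> < e"
  shows "\<exists>\<rho>>0. \<forall>x. x \<noteq> xb \<and> dist x xb < \<rho> \<longrightarrow>
           g x \<le> f x + ereal (e * norm (x - xb)) \<and> f x \<le> g x + ereal (e * norm (x - xb))"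
proof -
  have "Limsup (at xb) (\<lambda>x. absdiff (g x) (f x) / ereal (norm (x - xb))) < ereal e"
    using assms by (auto simp: Ptb_def intro: le_less_trans)
  from Limsup_lessD[OF this] obtain \<rho> where \<rho>: "\<rho> > 0"
    "\<forall>x. x \<noteq> xb \<and> dist x xb < \<rho> \<longrightarrow> absdiff (g x) (f x) / ereal (norm (x - xb)) < ereal e"
    by (auto simp: eventually_at)
  have "g x \<le> f x + ereal (e * norm (x - xb)) \<and> f x \<le> g x + ereal (e * norm (x - xb))"
    if "x \<noteq> xb" "dist x xb < \<rho>" for x
  proof -
    have n: "norm (x - xb) > 0" using that by simp
    have q: "absdiff (g x) (f x) / ereal (norm (x - xb)) < ereal e" using \<rho> that by blast
    have "absdiff (g x) (f x) < ereal (e * norm (x - xb))"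
    proof (cases "absdiff (g x) (f x)")
      case (real r)
      then have "r / norm (x - xb) < e" using q n by simp
      then show ?thesis using real n by (simp add: divide_less_eq)
    next
      case PInf then show ?thesis using q n by simp
    next
      case MInf then show ?thesis by simp
    qed
    then show ?thesis using absdiff_lt by blast
  qed
  then show ?thesis using \<rho> by blast
qed

lemma closed_subdiff: "closed (subdiff f x)"
proof -
  have "subdiff f x = (\<Inter>u. {xs. ereal (blinfun_apply xs (u - x)) \<le> f u - f x})"
    unfolding subdiff_def by auto
  moreover have "closed {xs::'a \<Rightarrow>\<^sub>L real. ereal (blinfun_apply xs (u - x)) \<le> f u - f x}" for u
  proof -
    have "continuous_on UNIV (\<lambda>xs::'a \<Rightarrow>\<^sub>L real. ereal (blinfun_apply xs (u - x)))"
      by (intro continuous_on_ereal continuous_intros)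
    then show ?thesis by (intro closed_Collect_le) (auto intro: continuous_on_const)
  qed
  ultimately show ?thesis by auto
qed

lemma convex_fin:
  assumes "convex_efun g" "g u = ereal a" "g v = ereal c" "0 < t" "t < 1"
  shows "g (t *\<^sub>R u + (1-t) *\<^sub>R v) \<le> ereal (t * a + (1-t) * c)"
  using assms unfolding convex_efun_def by (metis times_ereal.simps(1) plus_ereal.simps(1))




lemma Gamma0_lin: "Gamma0 (\<lambda>u. ereal (blinfun_apply L (u - xb)))"
  unfolding Gamma0_def proper_fun_def convex_efun_def lsc_efun_def
proof (intro conjI allI impI)
  fix x y and t :: real
  have "blinfun_apply L (t *\<^sub>R x + (1 - t) *\<^sub>R y - xb) = t * blinfun_apply L (x - xb) + (1-t) * blinfun_apply L (y - xb)"
  proof -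
    have "t *\<^sub>R x + (1 - t) *\<^sub>R y - xb = t *\<^sub>R (x - xb) + (1-t) *\<^sub>R (y - xb)" by (simp add: algebra_simps)
    then show ?thesis by (simp add: blinfun.add_right blinfun.scaleR_right)
  qed
  then show "ereal (blinfun_apply L (t *\<^sub>R x + (1 - t) *\<^sub>R y - xb))
         \<le> ereal t * ereal (blinfun_apply L (x - xb)) + ereal (1 - t) * ereal (blinfun_apply L (y - xb))"
    by simp
next
  fix c :: ereal
  have "continuous_on UNIV (\<lambda>u. ereal (blinfun_apply L (u - xb)))"
    by (intro continuous_on_ereal continuous_intros)
  then show "closed {x. ereal (blinfun_apply L (x - xb)) \<le> c}"
    by (intro closed_Collect_le) (auto intro: continuous_on_const)
qed auto

lemma lsc_open: "lsc_efun f \<Longrightarrow> open {x. a < f x}"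
proof -
  assume "lsc_efun f"
  then have "closed {x. f x \<le> a}" by (simp add: lsc_efun_def)
  moreover have "{x. a < f x} = - {x. f x \<le> a}" by auto
  ultimately show ?thesis by (simp add: open_Compl)
qed

lemma split_sum:
  fixes c u v :: ereal
  assumes "c < u + v" "u \<noteq> -\<infinity>" "v \<noteq> -\<infinity>"
  shows "\<exists>a b::real. ereal a < u \<and> ereal b < v \<and> c \<le> ereal a + ereal b"
proof (cases c)
  case MInf
  have "\<exists>z. ereal z < u" using assms by (cases u) (auto intro: lt_ex)
  then obtain a where "ereal a < u" by blast
  moreover have "\<exists>z. ereal z < v" using assms by (cases v) (auto intro: lt_ex)
  then obtain b where "ereal b < v" by blast
  ultimately show ?thesis using MInf by auto
next
  case PInf then show ?thesis using assms by simp
next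
  case (real r)
  show ?thesis
  proof (cases u)
    case (real p)
    show ?thesis
    proof (cases v)
      case (real q)
      define e where "e = (p + q - r) / 2"
      have "e > 0" using assms \<open>c = ereal r\<close> \<open>u = ereal p\<close> real by (simp add: e_def)
      have pq: "r < p + q" using assms \<open>c = ereal r\<close> \<open>u = ereal p\<close> real by simp
      have r3: "r \<le> (p - e/2) + (q - e/2)" using pq by (simp add: e_def field_simps)
      have "ereal (p - e/2) < u \<and> ereal (q - e/2) < v \<and> c \<le> ereal (p - e/2) + ereal (q - e/2)"
        using \<open>c = ereal r\<close> \<open>u = ereal p\<close> real \<open>e > 0\<close> r3 by simp
      then show ?thesis by blast
    next
      case PInf
      then have "ereal (p - 1) < u \<and> ereal (r - p + 1) < v \<and> c \<le> ereal (p - 1) + ereal (r - p + 1)"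
        using \<open>c = ereal r\<close> \<open>u = ereal p\<close> by simp
      then show ?thesis by blast
    next
      case MInf then show ?thesis using assms by simp
    qed
  next
    case PInf
    have "\<exists>z. ereal z < v" using assms by (cases v) (auto intro: lt_ex)
  then obtain b where "ereal b < v" by blast
    then have "ereal (r - b) < u \<and> ereal b < v \<and> c \<le> ereal (r - b) + ereal b"
      using PInf \<open>c = ereal r\<close> by simp
    then show ?thesis by blast
  next
    case MInf then show ?thesis using assms by simp
  qed
qed

lemma Gamma0_sum:
  assumes f: "Gamma0 f" and h: "Gamma0 h" and x0: "f x0 \<noteq> \<infinity>" "h x0 \<noteq> \<infinity>"
  shows "Gamma0 (\<lambda>u. f u + h u)"
proof -
  have fm: "\<And>x. f x \<noteq> -\<infinity>" and hm: "\<And>x. h x \<noteq> -\<infinity>" using f h by (auto simp: Gamma0_def proper_fun_def)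
  have fc: "convex_efun f" and hc: "convex_efun h" and fl: "lsc_efun f" and hl: "lsc_efun h"
    using f h by (auto simp: Gamma0_def)
  have pr: "proper_fun (\<lambda>u. f u + h u)"
    unfolding proper_fun_def using fm hm x0 by (auto intro!: exI[of _ x0])
  have distr: "ereal t * (a + b) = ereal t * a + ereal t * b" if "t \<ge> 0" "a \<noteq> -\<infinity>" "b \<noteq> -\<infinity>" for t a b
    using that by (cases a; cases b) (auto simp: distrib_left)
  have cv: "convex_efun (\<lambda>u. f u + h u)"
    unfolding convex_efun_def
  proof (intro allI impI)
    fix x y and t :: real assume t: "0 < t \<and> t < 1"
    have "f (t *\<^sub>R x + (1 - t) *\<^sub>R y) + h (t *\<^sub>R x + (1 - t) *\<^sub>R y)
        \<le> (ereal t * f x + ereal (1 - t) * f y) + (ereal t * h x + ereal (1 - t) * h y)"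
      using fc hc t unfolding convex_efun_def by (intro add_mono) auto
    also have "\<dots> = ereal t * (f x + h x) + ereal (1 - t) * (f y + h y)"
      using t fm hm by (simp add: distr ac_simps)
    finally show "f (t *\<^sub>R x + (1 - t) *\<^sub>R y) + h (t *\<^sub>R x + (1 - t) *\<^sub>R y)
        \<le> ereal t * (f x + h x) + ereal (1 - t) * (f y + h y)" .
  qed
  have ls: "lsc_efun (\<lambda>u. f u + h u)"
    unfolding lsc_efun_def
  proof
    fix c :: ereal
    define U where "U = (\<lambda>(a,b). {x. ereal a < f x} \<inter> {x. ereal b < h x}) ` {(a,b). c \<le> ereal a + ereal b}"
    have "open (\<Union>U)" unfolding U_def using lsc_open[OF fl] lsc_open[OF hl] by (intro open_Union) auto
    moreover have "\<Union>U = {x. c < f x + h x}"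
    proof (rule set_eqI, rule iffI)
      fix y assume "y \<in> \<Union>U"
      then obtain a b where ab: "c \<le> ereal a + ereal b" "ereal a < f y" "ereal b < h y"
        unfolding U_def by auto
      then have "ereal a + ereal b < f y + h y"
        using fm[of y] hm[of y] by (cases "f y"; cases "h y") auto
      then have "c < f y + h y" using ab(1) by (meson order.strict_trans1)
      then show "y \<in> {x. c < f x + h x}" by simp
    next
      fix x assume "x \<in> {x. c < f x + h x}"
      then obtain a b :: real where ab: "ereal a < f x" "ereal b < h x" "c \<le> ereal a + ereal b"
        using split_sum fm hm by blast
      then show "x \<in> \<Union>U" unfolding U_def by blast
    qed
    ultimately have "open {x. c < f x + h x}" by simp
    moreover have "{x. f x + h x \<le> c} = - {x. c < f x + h x}" by auto
    ultimately show "closed {x. f x + h x \<le> c}" by (simp add: closed_def)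
  qed
  show ?thesis using pr cv ls by (simp add: Gamma0_def)
qed

lemma Ptb_l_sub:
  assumes fm: "\<And>x. f x \<noteq> -\<infinity>"
  shows "Ptb_l f xb \<epsilon> \<subseteq> Ptb_c f xb \<epsilon>"
proof
  fix g assume "g \<in> Ptb_l f xb \<epsilon>"
  then obtain L :: "'a \<Rightarrow>\<^sub>L real" where L: "norm L \<le> \<epsilon>" "\<And>u. g u = f u + ereal (blinfun_apply L (u - xb))"
    unfolding Ptb_l_def by blast
  have e0: "0 \<le> \<epsilon>" using L(1) norm_ge_zero order_trans by blast
  have "g xb = f xb" using L(2)[of xb] by simp
  moreover have "Limsup (at xb) (\<lambda>x. absdiff (g x) (f x) / ereal (norm (x - xb))) \<le> ereal \<epsilon>"
  proof (rule Limsup_bounded)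
    show "\<forall>\<^sub>F x in at xb. absdiff (g x) (f x) / ereal (norm (x - xb)) \<le> ereal \<epsilon>"
      unfolding eventually_at_filter
    proof (rule always_eventually, intro allI impI)
      fix x :: 'a assume x: "x \<noteq> xb"
      then have n: "norm (x - xb) > 0" by simp
      have "absdiff (g x) (f x) \<le> ereal (\<epsilon> * norm (x - xb))"
      proof (cases "f x")
        case (real s)
        have "\<bar>blinfun_apply L (x - xb)\<bar> \<le> norm L * norm (x - xb)"
          using norm_blinfun[of L "x - xb"] by simp
        also have "\<dots> \<le> \<epsilon> * norm (x - xb)" using L(1) by (simp add: mult_right_mono)
        finally show ?thesis using real L(2)[of x] e0 by (auto simp: absdiff_def)
      next
        case PInf then show ?thesis using L(2)[of x] e0 by (simp add: absdiff_def)
      next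
        case MInf then show ?thesis using fm by simp
      qed
      then show "absdiff (g x) (f x) / ereal (norm (x - xb)) \<le> ereal \<epsilon>"
        using ratio_le n by blast
    qed
  qed
  moreover have "Gamma0 (\<lambda>u. ereal (blinfun_apply L (u - xb))) \<and> (\<forall>u. g u = f u + ereal (blinfun_apply L (u - xb)))"
    using Gamma0_lin L(2) by blast
  ultimately show "g \<in> Ptb_c f xb \<epsilon>" unfolding Ptb_c_def Ptb_def by blast
qed

lemma Ptb_c_sub:
  assumes f: "Gamma0 f" and f0: "f xb = 0"
  shows "Ptb_c f xb \<epsilon> \<subseteq> {g. Gamma0 g} \<inter> Ptb f xb \<epsilon>"
proof
  fix g assume g: "g \<in> Ptb_c f xb \<epsilon>"
  then obtain h where h: "Gamma0 h" "\<And>u. g u = f u + h u" and gP: "g \<in> Ptb f xb \<epsilon>"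
    unfolding Ptb_c_def by blast
  have "g xb = f xb" using gP by (simp add: Ptb_def)
  then have "h xb = 0" using h(2)[of xb] f0 by simp
  then have "Gamma0 (\<lambda>u. f u + h u)" using Gamma0_sum[OF f h(1), of xb] f0 by simp
  moreover have "g = (\<lambda>u. f u + h u)" using h(2) by auto
  ultimately show "g \<in> {g. Gamma0 g} \<inter> Ptb f xb \<epsilon>" using gP by simp
qed




lemma infdist_ge:
  assumes "A \<noteq> {}" "\<And>a. a \<in> A \<Longrightarrow> c \<le> dist x a"
  shows "c \<le> infdist x A"
  using assms by (simp add: infdist_notempty cINF_greatest)

lemma upper_part:
  fixes f :: "'a::real_normed_vector \<Rightarrow> ereal"
  assumes f: "Gamma0 f" and f0: "f xb = 0" and xs: "xs \<in> frontier (subdiff f xb)"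
    and xsn: "norm xs < \<epsilon>" and eta: "\<eta> > 0"
  shows "Er_Ptb_l f xb \<epsilon> \<le> ereal \<eta>"
proof -
  define A where "A = subdiff f xb"
  have fm: "\<And>x. f x \<noteq> -\<infinity>" and fc: "convex_efun f" using f by (auto simp: Gamma0_def proper_fun_def)
  have xsA: "xs \<in> A" using xs closed_subdiff[of f xb] unfolding A_def frontier_def by (simp add: closure_closed)
  have xsi: "xs \<notin> interior A" using xs unfolding A_def frontier_def by simp
  define \<delta> where "\<delta> = min (\<eta>/4) ((\<epsilon> - norm xs)/2)"
  have \<delta>: "\<delta> > 0" using eta xsn by (simp add: \<delta>_def)
  have "\<delta> \<le> \<eta>/4" and "\<delta> \<le> (\<epsilon> - norm xs)/2"
    unfolding \<delta>_def by (rule min.cobounded1, rule min.cobounded2)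
  then have \<delta>1: "4 * \<delta> \<le> \<eta>" and \<delta>2: "2 * \<delta> \<le> \<epsilon> - norm xs" by simp_all
  have "\<not> ball xs \<delta> \<subseteq> A" using xsi \<delta> mem_interior by blast
  then obtain ys where ys: "ys \<in> ball xs \<delta>" "ys \<notin> A" by blast
  then obtain u where u: "\<not> ereal (blinfun_apply ys (u - xb)) \<le> f u - f xb"
    unfolding A_def subdiff_def by blast
  then have fu: "f u < ereal (blinfun_apply ys (u - xb))" using f0 by simp
  then obtain F where F: "f u = ereal F" using fm[of u] by (cases "f u") auto
  define e where "e = u - xb"
  have Fys: "F < ys e" using fu F by (simp add: e_def)
  have "ereal (xs (u - xb)) \<le> f u - f xb" using xsA unfolding A_def subdiff_def by blast
  then have xsF: "xs e \<le> F" using F f0 by (simp add: e_def)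
  define ws where "ws = ys - xs"
  have wse: "ws e > 0" using Fys xsF by (simp add: ws_def blinfun.diff_left)
  have wsn: "norm ws < \<delta>" using ys(1) by (simp add: ws_def dist_norm norm_minus_commute)
  have wspos: "norm ws > 0"
  proof (rule ccontr)
    assume "\<not> norm ws > 0"
    then have "ws = 0" by simp
    then show False using wse by simp
  qed
  have e0: "e \<noteq> 0"
  proof
    assume "e = 0" then show False using wse by (simp add: blinfun.zero_right)
  qed
  define L where "L = ws - xs"
  have Ln: "norm L \<le> \<epsilon>"
  proof -
    have "norm L \<le> norm ws + norm xs" unfolding L_def by (rule norm_triangle_ineq4)
    also have "\<dots> \<le> \<epsilon>" using wsn \<delta>2 xsn by linarith
    finally show ?thesis .
  qed
  define g where "g v = f v + ereal (blinfun_apply L (v - xb))" for v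
  have gP: "g \<in> Ptb_l f xb \<epsilon>" unfolding Ptb_l_def g_def using Ln by blast
  have glow: "ereal (ws (v - xb)) \<le> g v" for v
  proof -
    have "ereal (xs (v - xb)) \<le> f v - f xb" using xsA unfolding A_def subdiff_def by blast
    then have "ereal (xs (v - xb)) \<le> f v" using f0 by simp
    then have "ereal (xs (v - xb)) + ereal (L (v - xb)) \<le> g v" unfolding g_def by (rule add_right_mono)
    then show ?thesis by (simp add: L_def blinfun.diff_left)
  qed
  define S where "S = sublevel0 g"
  have xbS: "xb \<in> S" using f0 by (simp add: S_def sublevel0_def g_def)
  have Ssub: "ws (v - xb) \<le> 0" if "v \<in> S" for v
  proof -
    have "g v \<le> 0" using that by (simp add: S_def sublevel0_def)
    then have "ereal (ws (v - xb)) \<le> 0" using glow[of v] by (rule order_trans[rotated])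
    then show ?thesis by simp
  qed
  have "Er g xb \<le> ereal \<eta>"
    unfolding Er_def
  proof (rule Liminf_within_le)
    fix r :: real assume r: "r > 0"
    define t where "t = min (1/2) (r / (2 * (norm e + 1)))"
    have "0 < 2 * (norm e + 1)" by (simp add: add_nonneg_pos)
    then have "0 < r / (2 * (norm e + 1))" by (rule divide_pos_pos[OF r])
    then have t: "0 < t" "t < 1" by (auto simp: t_def)
    have tr: "t * norm e < r"
    proof -
      have "t \<le> r / (2 * (norm e + 1))" unfolding t_def by (rule min.cobounded2)
      then have "t * (norm e + 1) \<le> r / (2 * (norm e + 1)) * (norm e + 1)" by (intro mult_right_mono) auto
      also have "\<dots> = r / 2"
      proof -
        have n1: "norm e + 1 > 0" by (simp add: add_nonneg_pos)
        then show ?thesis by (simp add: field_simps)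
      qed
      finally have "t * (norm e + 1) \<le> r / 2" .
      then show ?thesis using r t by (simp add: distrib_left)
    qed
    define x where "x = xb + t *\<^sub>R e"
    have xcomb: "x = t *\<^sub>R u + (1-t) *\<^sub>R xb" unfolding x_def e_def by (simp add: algebra_simps)
    have fx: "f x \<le> ereal (t * F)" using convex_fin[OF fc F f0[unfolded zero_ereal_def] t] xcomb by simp
    have Lx: "L (x - xb) = t * ws e - t * xs e" unfolding x_def L_def by (simp add: blinfun.diff_left blinfun.scaleR_right right_diff_distrib)
    have gx_up: "g x \<le> ereal (t * F + (t * ws e - t * xs e))" unfolding g_def Lx
      using add_right_mono[OF fx, of "ereal (t * ws e - t * xs e)"] by simp
    have wsx: "ws (x - xb) = t * ws e" unfolding x_def by (simp add: blinfun.scaleR_right)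
    have gx_lo: "ereal (t * ws e) \<le> g x" using glow[of x] wsx by simp
    have "g x \<noteq> \<infinity>" using gx_up by auto
    moreover have "g x \<noteq> -\<infinity>" using gx_lo by auto
    ultimately obtain a where a: "g x = ereal a" by (cases "g x") simp_all
    have a_lo: "t * ws e \<le> a" and a_up: "a \<le> t * F + (t * ws e - t * xs e)" using gx_lo gx_up a by simp_all
    have "t * ws e > 0" using t wse by simp
    then have apos: "a > 0" using a_lo by linarith
    have a_up2: "a < 2 * t * ws e"
    proof -
      have "F - xs e < ws e" using Fys by (simp add: ws_def blinfun.diff_left)
      then have "t * (F - xs e) < t * ws e" using t by simp
      then have "t * F - t * xs e < t * ws e" by (simp add: right_diff_distrib)
      then show ?thesis using a_up by linarith
    qed
    have D: "t * ws e / norm ws \<le> infdist x S"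
    proof (rule infdist_ge)
      show "S \<noteq> {}" using xbS by blast
    next
      fix v assume v: "v \<in> S"
      have "t * ws e \<le> ws (x - xb) - ws (v - xb)" using wsx Ssub[OF v] by simp
      also have "\<dots> = ws (x - v)" by (simp add: blinfun.diff_right)
      also have "\<dots> \<le> norm ws * norm (x - v)" using norm_blinfun[of ws "x - v"] by simp
      finally have "t * ws e \<le> dist x v * norm ws" by (simp add: dist_norm mult.commute)
      then show "t * ws e / norm ws \<le> dist x v" by (simp add: pos_divide_le_eq[OF wspos])
    qed
    have "t * ws e / norm ws > 0" using t wse wspos by simp
    then have Dpos: "infdist x S > 0" using D by linarith
    have "a \<le> \<eta> * infdist x S"
    proof -
      have "4 * norm ws \<le> \<eta>" using wsn \<delta>1 by linarith
      then have "4 \<le> \<eta> / norm ws" using wspos by (simp add: pos_le_divide_eq)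
      then have "4 * (t * ws e) \<le> (\<eta> / norm ws) * (t * ws e)" using t wse by (intro mult_right_mono) auto
      also have "(\<eta> / norm ws) * (t * ws e) = \<eta> * (t * ws e / norm ws)" by simp
      finally have "4 * (t * ws e) \<le> \<eta> * (t * ws e / norm ws)" .
      also have "\<dots> \<le> \<eta> * infdist x S" using eta by (intro mult_left_mono[OF D]) simp
      moreover have "2 * t * ws e = 2 * (t * ws e)" by simp
      moreover have "t * ws e > 0" using t wse by simp
      ultimately show ?thesis using a_up2 by linarith
    qed
    then have "g x \<le> ereal (\<eta> * infdist x S)" using a by simp
    then have "g x / ereal (infdist x S) \<le> ereal \<eta>" by (rule ratio_le[OF Dpos])
    moreover have "edist_set x (sublevel0 g) = ereal (infdist x S)"
      using xbS unfolding edist_set_def S_def by auto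
    ultimately have "g x / edist_set x (sublevel0 g) \<le> ereal \<eta>" by simp
    moreover have "x \<noteq> xb" using t e0 by (simp add: x_def)
    moreover have "dist x xb < r" using tr t by (simp add: x_def dist_norm)
    moreover have "x \<in> {x. g x > 0}" using a apos by simp
    ultimately show "\<exists>x\<in>{x. g x > 0}. x \<noteq> xb \<and> dist x xb < r \<and> g x / edist_set x (sublevel0 g) \<le> ereal \<eta>"
      by blast
  qed
  moreover have "Er_Ptb_l f xb \<epsilon> \<le> Er g xb" unfolding Er_Ptb_l_def using gP by (rule INF_lower)
  ultimately show ?thesis by simp
qed




lemma lower_part:
  fixes f :: "'a::real_normed_vector \<Rightarrow> ereal"
  assumes f: "Gamma0 f" and f0: "f xb = 0" and eps: "ereal \<epsilon> < bd_slope f xb" and e0: "\<epsilon> > 0"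
  shows "Er_Ptb f xb \<epsilon> \<noteq> 0"
proof -
  define A where "A = subdiff f xb"
  have fm: "\<And>x. f x \<noteq> -\<infinity>" and fc: "convex_efun f" using f by (auto simp: Gamma0_def proper_fun_def)
  obtain b2 where b2: "\<epsilon> < b2" "ereal b2 < bd_slope f xb"
    using ereal_dense2[OF eps] by auto
  define b where "b = (\<epsilon> + b2) / 2"
  define e' where "e' = (\<epsilon> + b) / 2"
  define c where "c = (b - e') / 2"
  have bb: "\<epsilon> < e'" "e' < b" "b < b2" using b2 by (auto simp: b_def e'_def)
  have c: "c > 0" "c \<le> b - e'" "b - e' = 2 * c" using bb by (auto simp: c_def)
  have dich: "(\<forall>u. ereal (b * norm (u - xb)) \<le> f u) \<or> (\<exists>u. f u < ereal (- b * norm (u - xb)))"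
  proof (rule ccontr)
    assume "\<not> ?thesis"
    then have n2: "\<And>u. ereal (- b * norm (u - xb)) \<le> f u" and n1: "\<exists>u. f u < ereal (b * norm (u - xb))"
      by (auto simp: not_le not_less)
    have b0: "b \<ge> 0" using bb e0 by linarith
    obtain ws where ws: "norm ws \<le> b" "ws \<in> A"
      using subgrad_exists[OF fc fm f0 b0 n2] unfolding A_def by blast
    obtain u1 where u1: "f u1 < ereal (b * norm (u1 - xb))" using n1 by blast
    obtain y0 where y0: "norm y0 \<le> 1" "blinfun_apply y0 (u1 - xb) = norm (u1 - xb)"
      using norming by blast
    define ys where "ys = b2 *\<^sub>R y0"
    have b2pos: "b2 > 0" using bb b0 by linarith
    have "b * norm (u1 - xb) \<le> b2 * norm (u1 - xb)" using bb by (intro mult_right_mono) auto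
    then have "f u1 - f xb < ereal (ys (u1 - xb))" using u1 f0 y0(2)
      by (simp add: ys_def blinfun.scaleR_left) (meson ereal_less_eq(3) order_less_le_trans)
    then have ysA: "ys \<notin> A" unfolding A_def subdiff_def by (auto simp: not_le)
    have ysn: "norm ys \<le> b2" using y0(1) b2pos by (simp add: ys_def mult_left_le)
    have conn: "connected (closed_segment ws ys)" by (simp add: convex_connected)
    have "closed_segment ws ys \<inter> A \<noteq> {}" using ws(2) by auto
    moreover have "closed_segment ws ys - A \<noteq> {}" using ysA by auto
    ultimately have "closed_segment ws ys \<inter> frontier A \<noteq> {}"
      using connected_Int_frontier[OF conn] by blast
    then obtain p where p: "p \<in> closed_segment ws ys" "p \<in> frontier A" by blast
    have "closed_segment ws ys \<subseteq> cball 0 b2"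
      using ws(1) ysn bb by (intro closed_segment_subset) (auto simp: convex_cball)
    then have pn: "norm p \<le> b2" using p(1) by auto
    have "bd_slope f xb \<le> ereal (norm p)"
      using p(2) unfolding bd_slope_def edist_set_def A_def
      by (auto intro!: order_trans[OF infdist_le[of p]] simp: dist_norm)
    then show False using pn b2(2) by (meson ereal_less_eq(3) leD order_trans)
  qed
  have "\<forall>g\<in>{g. Gamma0 g} \<inter> Ptb f xb \<epsilon>. ereal c \<le> Er g xb"
  proof
    fix g assume g: "g \<in> {g. Gamma0 g} \<inter> Ptb f xb \<epsilon>"
    have gG: "Gamma0 g" and gP: "g \<in> Ptb f xb \<epsilon>" using g by auto
    have gm: "\<And>x. g x \<noteq> -\<infinity>" and gc: "convex_efun g" using gG by (auto simp: Gamma0_def proper_fun_def)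
    have g0: "g xb = 0" using gP f0 by (simp add: Ptb_def)
    obtain \<rho> where \<rho>: "\<rho> > 0" "\<And>x. x \<noteq> xb \<Longrightarrow> dist x xb < \<rho> \<Longrightarrow>
           g x \<le> f x + ereal (e' * norm (x - xb)) \<and> f x \<le> g x + ereal (e' * norm (x - xb))"
      using Ptb_local[OF gP bb(1)] by blast
    define S where "S = sublevel0 g"
    have xbS: "xb \<in> S" using g0 by (simp add: S_def sublevel0_def)
    have edS: "edist_set x (sublevel0 g) = ereal (infdist x S)" for x
      using xbS unfolding edist_set_def S_def by auto
    have DS: "infdist x S \<le> norm (x - xb)" for x using infdist_le[OF xbS, of x] by (simp add: dist_norm)
    show "ereal c \<le> Er g xb"
      using dich
    proof
      assume I: "\<forall>u. ereal (b * norm (u - xb)) \<le> f u"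
      show ?thesis
        unfolding Er_def
      proof (rule Liminf_within_ge[OF \<rho>(1)])
        fix x assume x: "x \<in> {x. g x > 0}" "x \<noteq> xb" "dist x xb < \<rho>"
        define n where "n = norm (x - xb)"
        have "f x \<le> g x + ereal (e' * n)" using \<rho>(2)[OF x(2,3)] by (simp add: n_def)
        then have "ereal (b * n) \<le> g x + ereal (e' * n)" using I[rule_format, of x] by (simp add: n_def)
        then have "ereal ((b - e') * n) \<le> g x" using gm[of x] by (cases "g x") (auto simp: left_diff_distrib)
        moreover have "c * infdist x S \<le> (b - e') * n"
          using DS[of x] c infdist_nonneg[of x S] by (simp add: n_def mult_mono)
        ultimately have "ereal (c * infdist x S) \<le> g x" by (meson ereal_less_eq(3) order_trans)
        then have "ereal c \<le> g x / ereal (infdist x S)"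
          using x(1) c(1) infdist_nonneg by (intro ratio_ge) auto
        then show "ereal c \<le> g x / edist_set x (sublevel0 g)" by (simp add: edS)
      qed
    next
      assume "\<exists>u. f u < ereal (- b * norm (u - xb))"
      then obtain u0 where u0: "f u0 < ereal (- b * norm (u0 - xb))" by blast
      obtain F0 where F0: "f u0 = ereal F0" using u0 fm[of u0] by (cases "f u0") auto
      define n0 where "n0 = norm (u0 - xb)"
      have F0b: "F0 < - b * n0" using u0 F0 by (simp add: n0_def)
      have n0: "n0 > 0"
      proof (rule ccontr)
        assume "\<not> n0 > 0" then have "u0 = xb" by (simp add: n0_def)
        then show False using F0b F0 f0 n0_def by simp
      qed
      show ?thesis
        unfolding Er_def
      proof (rule Liminf_within_ge[of "min \<rho> n0"])
        show "min \<rho> n0 > 0" using \<rho>(1) n0 by simp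
      next
        fix x assume x: "x \<in> {x. g x > 0}" "x \<noteq> xb" "dist x xb < min \<rho> n0"
        define s where "s = norm (x - xb)"
        have s: "s > 0" "s < \<rho>" "s < n0" using x by (auto simp: s_def dist_norm)
        show "ereal c \<le> g x / edist_set x (sublevel0 g)"
        proof (cases "g x = \<infinity>")
          case True
          then show ?thesis using c(1) infdist_nonneg by (simp add: edS ratio_ge)
        next
          case False
          then obtain a where a: "g x = ereal a" using gm[of x] by (cases "g x") auto
          have apos: "a > 0" using x(1) a by simp
          define t where "t = s / n0"
          have t: "0 < t" "t < 1" using s n0 by (auto simp: t_def)
          define w where "w = t *\<^sub>R u0 + (1 - t) *\<^sub>R xb"
          have wxb: "w - xb = t *\<^sub>R (u0 - xb)" by (simp add: w_def algebra_simps)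
          have wn: "norm (w - xb) = s" using t n0 s(1) by (simp add: wxb n0_def[symmetric] t_def)
          have fw: "f w \<le> ereal (t * F0)" using convex_fin[OF fc F0 f0[unfolded zero_ereal_def] t] by (simp add: w_def)
          have tF: "t * F0 < - b * s"
          proof -
            have "t * F0 < t * (- b * n0)" using F0b t by (intro mult_strict_left_mono) auto
            also have "t * (- b * n0) = - b * s" using n0 by (simp add: t_def)
            finally show ?thesis .
          qed
          have "w \<noteq> xb" using wn s by auto
          moreover have "dist w xb < \<rho>" using wn s by (simp add: dist_norm)
          ultimately have "g w \<le> f w + ereal (e' * s)" using \<rho>(2) wn by auto
          also have "\<dots> \<le> ereal (t * F0 + e' * s)" using add_right_mono[OF fw, of "ereal (e' * s)"] by simp
          finally have gw: "g w \<le> ereal (t * F0 + e' * s)" .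
          then obtain gwv where gwv: "g w = ereal gwv" using gm[of w] by (cases "g w") auto
          have gwl: "gwv < - 2 * c * s"
          proof -
            have "gwv \<le> t * F0 + e' * s" using gw gwv by simp
            moreover have "- b * s + e' * s = - (2 * c) * s" using c(3) by (simp add: algebra_simps)
            ultimately show ?thesis using tF by linarith
          qed
          define l where "l = a / (a + 2 * c * s)"
          have cs: "2 * c * s > 0" using c(1) s(1) by simp
          have l: "0 < l" "l < 1" using apos cs by (auto simp: l_def)
          have l1: "(1 - l) * a = l * (2 * c * s)" using apos cs by (simp add: l_def field_simps)
          define y where "y = l *\<^sub>R w + (1 - l) *\<^sub>R x"
          have "g y \<le> ereal (l * gwv + (1 - l) * a)" unfolding y_def by (rule convex_fin[OF gc gwv a l])
          moreover have "l * gwv + (1 - l) * a \<le> 0"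
          proof -
            have "l * gwv \<le> l * (- 2 * c * s)" using gwl l by (intro mult_left_mono) auto
            then show ?thesis using l1 by (simp add: algebra_simps)
          qed
          ultimately have "g y \<le> 0" by (simp add: order_trans zero_ereal_def)
          then have yS: "y \<in> S" by (simp add: S_def sublevel0_def)
          have "infdist x S \<le> dist x y" by (rule infdist_le[OF yS])
          also have "dist x y = l * norm (x - w)"
          proof -
            have "x - y = l *\<^sub>R (x - w)" by (simp add: y_def algebra_simps)
            then show ?thesis using l by (simp add: dist_norm)
          qed
          also have "\<dots> \<le> l * (2 * s)"
          proof -
            have "norm (x - w) \<le> norm (x - xb) + norm (w - xb)" using norm_triangle_ineq4[of "x - xb" "w - xb"] by simp
            then have "norm (x - w) \<le> 2 * s" using wn s_def by simp
            then show ?thesis using l by simp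
          qed
          finally have Dl: "infdist x S \<le> l * (2 * s)" .
          have "c * infdist x S \<le> c * (l * (2 * s))" using Dl c(1) by (simp add: mult_left_mono)
          also have "\<dots> = l * (2 * c * s)" by simp
          also have "\<dots> = (1 - l) * a" using l1 by simp
          also have "\<dots> \<le> a" using l apos by (simp add: mult_left_le_one_le)
          finally have "ereal (c * infdist x S) \<le> g x" using a by simp
          then have "ereal c \<le> g x / ereal (infdist x S)"
            using apos a c(1) infdist_nonneg by (intro ratio_ge) auto
          then show ?thesis by (simp add: edS)
        qed
      qed
    qed
  qed
  then have "ereal c \<le> Er_Ptb f xb \<epsilon>" unfolding Er_Ptb_def by (intro INF_greatest) blast
  then show ?thesis using c(1) by auto
qed




lemma infdist_lt_ex:
  assumes "A \<noteq> {}" "infdist x A < r"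
  shows "\<exists>a\<in>A. dist x a < r"
proof -
  have "bdd_below ((\<lambda>a. dist x a) ` A)" by (rule bdd_belowI[of _ 0]) auto
  then show ?thesis using assms by (simp add: infdist_notempty cINF_less_iff)
qed

lemma ereal_le_0_eps:
  assumes "\<And>\<eta>. \<eta> > 0 \<Longrightarrow> x \<le> ereal \<eta>"
  shows "x \<le> (0::ereal)"
proof (rule dense_ge)
  fix y :: ereal assume "0 < y"
  then show "x \<le> y"
  proof (cases y)
    case (real r) then show ?thesis using assms \<open>0 < y\<close> by simp
  qed auto
qed

theorem mainTheorem2:
  fixes f :: "'a::banach \<Rightarrow> ereal" and xb :: 'a
  assumes "Gamma0 f" and "f xb = 0"
  shows "bd_slope f xb = Inf {ereal \<epsilon> | \<epsilon>. \<epsilon> > 0 \<and> Er_Ptb f xb \<epsilon> = 0}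
       \<and> Inf {ereal \<epsilon> | \<epsilon>. \<epsilon> > 0 \<and> Er_Ptb f xb \<epsilon> = 0}
           = Inf {ereal \<epsilon> | \<epsilon>. \<epsilon> > 0 \<and> Er_Ptb_c f xb \<epsilon> = 0}
       \<and> Inf {ereal \<epsilon> | \<epsilon>. \<epsilon> > 0 \<and> Er_Ptb_c f xb \<epsilon> = 0}
           = Inf {ereal \<epsilon> | \<epsilon>. \<epsilon> > 0 \<and> Er_Ptb_l f xb \<epsilon> = 0}"
proof -
  have fm: "\<And>x. f x \<noteq> -\<infinity>" using assms(1) by (auto simp: Gamma0_def proper_fun_def)
  define S1 where "S1 = {ereal \<epsilon> | \<epsilon>. \<epsilon> > 0 \<and> Er_Ptb f xb \<epsilon> = 0}"
  define S2 where "S2 = {ereal \<epsilon> | \<epsilon>. \<epsilon> > 0 \<and> Er_Ptb_c f xb \<epsilon> = 0}"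
  define S3 where "S3 = {ereal \<epsilon> | \<epsilon>. \<epsilon> > 0 \<and> Er_Ptb_l f xb \<epsilon> = 0}"
  have m1: "Er_Ptb f xb \<epsilon> \<le> Er_Ptb_c f xb \<epsilon>" for \<epsilon>
    unfolding Er_Ptb_def Er_Ptb_c_def by (rule INF_superset_mono[OF Ptb_c_sub[OF assms]]) simp
  have m2: "Er_Ptb_c f xb \<epsilon> \<le> Er_Ptb_l f xb \<epsilon>" for \<epsilon>
    unfolding Er_Ptb_c_def Er_Ptb_l_def by (rule INF_superset_mono[OF Ptb_l_sub[OF fm]]) simp
  have n1: "0 \<le> Er_Ptb f xb \<epsilon>" for \<epsilon>
    unfolding Er_Ptb_def by (rule INF_greatest) (rule Er_nonneg)
  have n2: "0 \<le> Er_Ptb_c f xb \<epsilon>" for \<epsilon>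
    unfolding Er_Ptb_c_def by (rule INF_greatest) (rule Er_nonneg)
  have "S3 \<subseteq> S2"
  proof
    fix x assume "x \<in> S3"
    then obtain \<epsilon> where e: "x = ereal \<epsilon>" "\<epsilon> > 0" "Er_Ptb_l f xb \<epsilon> = 0" unfolding S3_def by blast
    then have "Er_Ptb_c f xb \<epsilon> = 0" using m2[of \<epsilon>] n2[of \<epsilon>] by (intro antisym) auto
    then show "x \<in> S2" unfolding S2_def using e by blast
  qed
  moreover have "S2 \<subseteq> S1"
  proof
    fix x assume "x \<in> S2"
    then obtain \<epsilon> where e: "x = ereal \<epsilon>" "\<epsilon> > 0" "Er_Ptb_c f xb \<epsilon> = 0" unfolding S2_def by blast
    then have "Er_Ptb f xb \<epsilon> = 0" using m1[of \<epsilon>] n1[of \<epsilon>] by (intro antisym) auto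
    then show "x \<in> S1" unfolding S1_def using e by blast
  qed
  ultimately have I12: "Inf S1 \<le> Inf S2" and I23: "Inf S2 \<le> Inf S3" by (auto intro: Inf_superset_mono)
  define A where "A = subdiff f xb"
  have I3: "Inf S3 \<le> bd_slope f xb"
  proof (cases "frontier A = {}")
    case True then show ?thesis by (simp add: bd_slope_def edist_set_def A_def)
  next
    case False
    then have bd: "bd_slope f xb = ereal (infdist 0 (frontier A))" by (simp add: bd_slope_def edist_set_def A_def)
    show ?thesis
    proof (rule dense_ge)
      fix y assume y: "bd_slope f xb < y"
      show "Inf S3 \<le> y"
      proof (cases y)
        case PInf then show ?thesis by simp
      next
        case MInf then show ?thesis using y by simp
      next
        case (real \<epsilon>)
        then have le: "infdist 0 (frontier A) < \<epsilon>" using y bd by simp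
        then have epos: "\<epsilon> > 0" using infdist_nonneg[of 0 "frontier A"] by linarith
        obtain xs where xs: "xs \<in> frontier A" "dist 0 xs < \<epsilon>" using infdist_lt_ex[OF False le] by blast
        have "Er_Ptb_l f xb \<epsilon> \<le> 0"
          by (rule ereal_le_0_eps, rule upper_part[OF assms]) (use xs in \<open>auto simp: A_def\<close>)
        moreover have "0 \<le> Er_Ptb_l f xb \<epsilon>"
          unfolding Er_Ptb_l_def by (rule INF_greatest) (rule Er_nonneg)
        ultimately have "ereal \<epsilon> \<in> S3" unfolding S3_def using epos by auto
        then show ?thesis using real by (auto intro: Inf_lower)
      qed
    qed
  qed
  have I1: "bd_slope f xb \<le> Inf S1"
  proof (rule Inf_greatest)
    fix x assume "x \<in> S1"
    then obtain \<epsilon> where e: "x = ereal \<epsilon>" "\<epsilon> > 0" "Er_Ptb f xb \<epsilon> = 0" unfolding S1_def by blast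
    show "bd_slope f xb \<le> x"
    proof (rule ccontr)
      assume "\<not> bd_slope f xb \<le> x"
      then have "ereal \<epsilon> < bd_slope f xb" using e(1) by simp
      from lower_part[OF assms this e(2)] e(3) show False by simp
    qed
  qed
  from I1 I12 I23 I3 have "bd_slope f xb = Inf S1" "Inf S1 = Inf S2" "Inf S2 = Inf S3"
    by (auto intro: antisym order_trans)
  then show ?thesis unfolding S1_def S2_def S3_def by blast
qed


end
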